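(* Let $C$ be a square in the plane. For a point $p\in C$, let $D_p$ be the set of points of the plane that are closer to $p$ than to any point of the boundary $\partial C$, and let $f(p)=\operatorname{area}(D_p)/\operatorname{area}(C)$. If $p$ is a point chosen uniformly at random from $C$, then $\Pr[f(p)\ge 1/15]\ge 1/15$.
   Context: Distances are Euclidean. *)

theory Defs
  imports "HOL-Analysis.Analysis"
begin

definition is_square :: "(real^2) set \<Rightarrow> bool" where
  "is_square C \<longleftrightarrow> (\<exists>a u v. u \<noteq> 0 \<and> norm u = norm v \<and> inner u v = 0 \<and>
      C = {a + s *\<^sub>R u + t *\<^sub>R v | s t. 0 \<le> s \<and> s \<le> 1 \<and> 0 \<le> t \<and> t \<le> 1})"

definition closer_region :: "(real^2) set \<Rightarrow> real^2 \<Rightarrow> (real^2) set" where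
  "closer_region C p = {x. \<forall>q \<in> frontier C. dist x p < dist x q}"

definition area_ratio :: "(real^2) set \<Rightarrow> real^2 \<Rightarrow> real" where
  "area_ratio C p = measure lebesgue (closer_region C p) / measure lebesgue C"

end

theory Submission
  imports Defs
begin

lemma aux1:
  fixes a b c d :: real
  assumes "a*c + b*d = 0" "a*a = d*d"
  shows "a*(a*b + c*d) = 0"
proof -
  have "a*(a*b + c*d) = (a*a)*b + (a*c)*d" by (simp add: algebra_simps)
  also have "\<dots> = (d*d)*b + (a*c)*d" using assms(2) by simp
  also have "\<dots> = d*(a*c + b*d)" by (simp add: algebra_simps)
  finally show ?thesis using assms(1) by simp
qed

lemma aux2:
  fixes a b c d :: real
  assumes "a*c + b*d = 0" "c*c = b*b"
  shows "c*(a*b + c*d) = 0"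
proof -
  have "c*(a*b + c*d) = (a*c)*b + (c*c)*d" by (simp add: algebra_simps)
  also have "\<dots> = (a*c)*b + (b*b)*d" using assms(2) by simp
  also have "\<dots> = b*(a*c + b*d)" by (simp add: algebra_simps)
  finally show ?thesis using assms(1) by simp
qed

lemma decomp2:
  fixes u v w :: "real^2"
  assumes uv: "inner u v = 0" and nuv: "norm u = norm v" and u0: "u \<noteq> 0"
  shows "(norm u)^2 *\<^sub>R w = (inner w u) *\<^sub>R u + (inner w v) *\<^sub>R v"
proof -
  define L2 where "L2 = (norm u)^2"
  have L2pos: "L2 > 0" using u0 by (simp add: L2_def)
  have hu: "u$1 * u$1 + u$2 * u$2 = L2" unfolding L2_def power2_norm_eq_inner
    by (simp add: inner_vec_def sum_2)
  have hv: "v$1 * v$1 + v$2 * v$2 = L2" unfolding L2_def nuv power2_norm_eq_inner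
    by (simp add: inner_vec_def sum_2)
  have ho: "u$1 * v$1 + u$2 * v$2 = 0" using uv by (simp add: inner_vec_def sum_2)
  have "(L2 - u$2* u$2) * (L2 - v$2* v$2) = (u$1* v$1)*(u$1* v$1)"
  proof -
    have a: "L2 - u$2* u$2 = u$1* u$1" using hu by linarith
    have b: "L2 - v$2* v$2 = v$1* v$1" using hv by linarith
    show ?thesis unfolding a b by (simp add: algebra_simps)
  qed
  also have "u$1* v$1 = - (u$2* v$2)" using ho by linarith
  finally have "L2 * (L2 - u$2* u$2 - v$2* v$2) = 0" by (simp add: algebra_simps)
  hence h2: "u$2* u$2 + v$2* v$2 = L2" using L2pos by simp
  hence h1: "u$1* u$1 + v$1* v$1 = L2" using hu hv by linarith
  have e1: "v$1* v$1 = u$2* u$2" using h1 hu by linarith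
  have e2: "u$1* u$1 = v$2* v$2" using h1 hv by linarith
  have X1: "u$1 * (u$1* u$2 + v$1* v$2) = 0"
    using aux1[OF ho e2] .
  have X2: "v$1 * (u$1* u$2 + v$1* v$2) = 0"
    using aux2[OF ho e1] .
  have h12: "u$1* u$2 + v$1* v$2 = 0"
  proof (cases "u$1 = 0 \<and> v$1 = 0")
    case True then show ?thesis by simp
  next
    case False then show ?thesis using X1 X2 by auto
  qed
  show ?thesis unfolding L2_def[symmetric]
  proof (subst vec_eq_iff, rule allI)
    fix i :: 2
    have "i = 1 \<or> i = 2" using exhaust_2 by auto
    then show "(L2 *\<^sub>R w) $ i = (inner w u *\<^sub>R u + inner w v *\<^sub>R v) $ i"
    proof
      assume "i = 1"
      have "(inner w u *\<^sub>R u + inner w v *\<^sub>R v) $ 1 = w$1 * (u$1* u$1 + v$1* v$1) + w$2 * (u$1* u$2 + v$1* v$2)"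
        by (simp add: inner_vec_def sum_2 algebra_simps)
      then show ?thesis using \<open>i = 1\<close> h1 h12 by simp
    next
      assume "i = 2"
      have "(inner w u *\<^sub>R u + inner w v *\<^sub>R v) $ 2 = w$1 * (u$1* u$2 + v$1* v$2) + w$2 * (u$2* u$2 + v$2* v$2)"
        by (simp add: inner_vec_def sum_2 algebra_simps)
      then show ?thesis using \<open>i = 2\<close> h2 h12 by simp
    qed
  qed
qed


lemma closer_region_infdist:
  assumes "closed F" "F \<noteq> {}" "F = frontier C"
  shows "closer_region C p = {x. dist x p < infdist x F}"
proof (intro set_eqI iffI)
  fix x assume "x \<in> closer_region C p"
  then have h: "\<forall>q\<in>F. dist x p < dist x q" using assms(3) by (simp add: closer_region_def)
  obtain q where "q \<in> F" "infdist x F = dist x q" using infdist_attains_inf[OF assms(1,2)] by blast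
  then show "x \<in> {x. dist x p < infdist x F}" using h by simp
next
  fix x assume "x \<in> {x. dist x p < infdist x F}"
  then show "x \<in> closer_region C p" using assms(3) infdist_le[of _ F x]
    by (force simp: closer_region_def)
qed

lemma closer_region_sub:
  assumes "p \<in> C"
  shows "closer_region C p \<subseteq> C"
proof
  fix x assume x: "x \<in> closer_region C p"
  show "x \<in> C"
  proof (rule ccontr)
    assume "x \<notin> C"
    then have "closed_segment p x \<inter> frontier C \<noteq> {}"
      using assms by (intro connected_Int_frontier) auto
    then obtain q where q: "q \<in> closed_segment p x" "q \<in> frontier C" by blast
    have "dist q x \<le> dist p x" using dist_in_closed_segment[OF q(1)] by simp
    moreover have "dist x p < dist x q" using x q(2) by (simp add: closer_region_def)
    ultimately show False by (simp add: dist_commute)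
  qed
qed

theorem lemma3p2:
  assumes "is_square C"
  shows "measure (uniform_measure lebesgue C) {p \<in> C. area_ratio C p \<ge> 1/15} \<ge> 1/15"
proof -
  obtain a u v :: "real^2" where u0: "u \<noteq> 0" and nuv: "norm u = norm v" and uv: "inner u v = 0"
    and Cdef: "C = {a + s *\<^sub>R u + t *\<^sub>R v | s t. 0 \<le> s \<and> s \<le> 1 \<and> 0 \<le> t \<and> t \<le> 1}"
    using assms unfolding is_square_def by blast
  define L where "L = norm u"
  have Lpos: "L > 0" using u0 by (simp add: L_def)
  define M :: "real^2 \<Rightarrow> real^2" where "M = (\<lambda>w. w$1 *\<^sub>R u + w$2 *\<^sub>R v)"
  have linM: "linear M" unfolding M_def
    by (intro linearI) (auto simp: algebra_simps)
  define T where "T = (\<lambda>w. a + M w)"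
  define vv :: "real \<Rightarrow> real \<Rightarrow> real^2" where "vv = (\<lambda>s t. \<chi> i. if i = 1 then s else t)"
  have vv1[simp]: "vv s t $ 1 = s" and vv2[simp]: "vv s t $ 2 = t" for s t by (simp_all add: vv_def)
  have Tvv: "T (vv s t) = a + s *\<^sub>R u + t *\<^sub>R v" for s t by (simp add: T_def M_def)
  have box_iff: "vv s t \<in> cbox (vec lo) (vec hi) \<longleftrightarrow> lo \<le> s \<and> s \<le> hi \<and> lo \<le> t \<and> t \<le> hi" for s t lo hi
    by (simp add: mem_box_cart forall_2)
  have box_iff': "w \<in> cbox (vec lo) (vec hi) \<longleftrightarrow> lo \<le> w$1 \<and> w$1 \<le> hi \<and> lo \<le> w$2 \<and> w$2 \<le> hi" for w :: "real^2" and lo hi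
    by (simp add: mem_box_cart forall_2)
  have Tw: "T w = a + (w$1) *\<^sub>R u + (w$2) *\<^sub>R v" for w by (simp add: T_def M_def)
  have CT: "C = T ` cbox (vec 0) (vec 1)"
  proof (intro set_eqI iffI)
    fix x assume "x \<in> C"
    then obtain s t where "x = a + s *\<^sub>R u + t *\<^sub>R v" "0 \<le> s \<and> s \<le> 1 \<and> 0 \<le> t \<and> t \<le> 1"
      unfolding Cdef by blast
    then show "x \<in> T ` cbox (vec 0) (vec 1)"
      by (intro image_eqI[of _ _ "vv s t"]) (simp_all add: Tvv mem_box_cart forall_2)
  next
    fix x assume "x \<in> T ` cbox (vec 0) (vec 1)"
    then obtain w where "x = T w" "w \<in> cbox (vec 0) (vec 1)" by blast
    then show "x \<in> C" unfolding Cdef Tw by (auto simp: mem_box_cart forall_2)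
  qed
  have contT: "continuous_on UNIV T" unfolding T_def
    using linear_continuous_on[OF linear_conv_bounded_linear[THEN iffD1, OF linM]]
    by (intro continuous_intros) auto
  have compC: "compact C" unfolding CT
    by (rule compact_continuous_image[OF continuous_on_subset[OF contT]]) auto
  have aC: "a \<in> C" unfolding Cdef by (intro CollectI exI[of _ 0]) auto
  define F where "F = frontier C"
  have Fne: "F \<noteq> {}" unfolding F_def frontier_eq_empty
    using aC compact_imp_bounded[OF compC] by auto
  have Fcl: "closed F" unfolding F_def by simp
  have Dp: "closer_region C p = {x. dist x p < infdist x F}" for p
    using closer_region_infdist[OF Fcl Fne F_def] .
  have Dopen: "open (closer_region C p)" for p unfolding Dp
    by (intro open_Collect_less continuous_intros)
  define det0 where "det0 = \<bar>det (matrix M)\<bar>"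
  have meas_img: "measure lebesgue (T ` cbox (vec lo) (vec hi)) = det0 * (hi - lo)^2"
    if "lo \<le> hi" for lo hi
  proof -
    have "T ` cbox (vec lo) (vec hi) = (+) a ` (M ` cbox (vec lo) (vec hi))"
      by (simp add: T_def image_image)
    then have "measure lebesgue (T ` cbox (vec lo) (vec hi)) = measure lebesgue (M ` cbox (vec lo) (vec hi))"
      by (simp add: measure_translation)
    also have "\<dots> = det0 * measure lebesgue (cbox (vec lo) (vec hi :: real^2))"
      unfolding det0_def by (rule measure_lebesgue_linear_transformation) (auto simp: linM)
    also have "measure lebesgue (cbox (vec lo) (vec hi :: real^2)) = measure lborel (cbox (vec lo) (vec hi :: real^2))"
      by (rule measure_completion) simp
    also have "\<dots> = (hi - lo)^2" using that
      by (subst content_cbox_cart) (auto simp: box_iff' sum_2 prod_2 power2_eq_square)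
    finally show ?thesis .
  qed
  have det0_eq: "det0 = L^2"
  proof -
    have "det (matrix M) = u$1 * v$2 - v$1 * u$2"
      by (simp add: det_2 matrix_def M_def axis_def)
    moreover have "(u$1 * v$2 - v$1 * u$2)^2 = (u$1* u$1 + u$2* u$2) * (v$1* v$1 + v$2* v$2) - (u$1* v$1 + u$2* v$2)^2"
      by (simp add: power2_eq_square algebra_simps)
    moreover have "u$1* u$1 + u$2* u$2 = L^2" unfolding L_def power2_norm_eq_inner
      by (simp add: inner_vec_def sum_2)
    moreover have "v$1* v$1 + v$2* v$2 = L^2" unfolding L_def nuv power2_norm_eq_inner
      by (simp add: inner_vec_def sum_2)
    moreover have "u$1* v$1 + u$2* v$2 = 0" using uv by (simp add: inner_vec_def sum_2)
    ultimately have "det0^2 = (L^2)^2" unfolding det0_def by (simp add: power2_eq_square)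
    moreover have "det0 \<ge> 0" unfolding det0_def by simp
    ultimately show ?thesis by (metis zero_le_power2 power2_eq_iff_nonneg)
  qed
  have measC: "measure lebesgue C = L^2" unfolding CT using meas_img[of 0 1] det0_eq by simp
  define Q where "Q = T ` cbox (vec (3/10)) (vec (7/10))"
  have measQ: "measure lebesgue Q = L^2 * (4/10)^2" unfolding Q_def using meas_img[of "3/10" "7/10"] det0_eq by simp
  have QC: "Q \<subseteq> C" unfolding Q_def CT by (intro image_mono) (auto simp: mem_box_cart forall_2)
  have ballC: "ball p (3/10 * L) \<subseteq> C" if "p \<in> Q" for p
  proof
    fix x assume x: "x \<in> ball p (3/10 * L)"
    obtain w where w: "w \<in> cbox (vec (3/10)) (vec (7/10))" "p = T w" using \<open>p \<in> Q\<close> unfolding Q_def by blast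
    define s' where "s' = inner (x - a) u / L^2"
    define t' where "t' = inner (x - a) v / L^2"
    have dec: "L^2 *\<^sub>R (x - a) = inner (x - a) u *\<^sub>R u + inner (x - a) v *\<^sub>R v"
      unfolding L_def by (rule decomp2[OF uv nuv u0])
    have xeq: "x = a + s' *\<^sub>R u + t' *\<^sub>R v"
    proof -
      have "x - a = (1 / L^2) *\<^sub>R (L^2 *\<^sub>R (x - a))" using Lpos by simp
      also have "\<dots> = s' *\<^sub>R u + t' *\<^sub>R v" unfolding dec s'_def t'_def
        by (simp add: scaleR_add_right divide_inverse_commute)
      finally show ?thesis by (simp add: algebra_simps)
    qed
    have nv: "norm v = L" using nuv L_def by simp
    have pa: "p - a = w$1 *\<^sub>R u + w$2 *\<^sub>R v" using w(2) Tw by simp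
    have iuu: "inner u u = L^2" unfolding L_def by (simp add: power2_norm_eq_inner)
    have ivv: "inner v v = L^2" unfolding nv[symmetric] by (simp add: power2_norm_eq_inner)
    have ipu: "inner (p - a) u = w$1 * L^2" unfolding pa
      using iuu uv by (simp add: inner_add_left inner_commute[of v u])
    have ipv: "inner (p - a) v = w$2 * L^2" unfolding pa
      using ivv uv by (simp add: inner_add_left inner_commute[of v u])
    have dxp: "norm (x - p) < 3/10 * L" using x by (simp add: dist_norm norm_minus_commute)
    have cu: "\<bar>inner (x - p) u\<bar> < 3/10 * L^2"
    proof -
      have "\<bar>inner (x - p) u\<bar> \<le> norm (x - p) * L" unfolding L_def by (rule Cauchy_Schwarz_ineq2)
      also have "\<dots> < 3/10 * L * L" using dxp Lpos by simp
      finally show ?thesis by (simp add: power2_eq_square)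
    qed
    have cv: "\<bar>inner (x - p) v\<bar> < 3/10 * L^2"
    proof -
      have "\<bar>inner (x - p) v\<bar> \<le> norm (x - p) * L" unfolding nv[symmetric] by (rule Cauchy_Schwarz_ineq2)
      also have "\<dots> < 3/10 * L * L" using dxp Lpos by simp
      finally show ?thesis by (simp add: power2_eq_square)
    qed
    have xa: "x - a = (p - a) + (x - p)" by simp
    have s'eq: "s' = w$1 + inner (x - p) u / L^2"
      unfolding s'_def xa inner_add_left ipu using Lpos by (simp add: field_simps)
    have t'eq: "t' = w$2 + inner (x - p) v / L^2"
      unfolding t'_def xa inner_add_left ipv using Lpos by (simp add: field_simps)
    have L2pos: "L^2 > 0" using Lpos by simp
    have "\<bar>inner (x - p) u / L^2\<bar> < 3/10" using cu L2pos by (simp add: abs_divide divide_less_eq)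
    moreover have "\<bar>inner (x - p) v / L^2\<bar> < 3/10" using cv L2pos by (simp add: abs_divide divide_less_eq)
    moreover have "3/10 \<le> w$1 \<and> w$1 \<le> 7/10 \<and> 3/10 \<le> w$2 \<and> w$2 \<le> 7/10" using w(1) box_iff' by blast
    ultimately have "0 \<le> s' \<and> s' \<le> 1 \<and> 0 \<le> t' \<and> t' \<le> 1" unfolding s'eq t'eq by linarith
    then show "x \<in> C" unfolding Cdef using xeq by blast
  qed
  have farF: "dist p q \<ge> 3/10 * L" if "p \<in> Q" "q \<in> F" for p q
  proof (rule ccontr)
    assume neg: "\<not> 3/10 * L \<le> dist p q"
    have "ball q (3/10 * L - dist p q) \<subseteq> ball p (3/10 * L)"
    proof
      fix x assume "x \<in> ball q (3/10 * L - dist p q)"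
      then have "dist q x < 3/10 * L - dist p q" by simp
      moreover have "dist p x \<le> dist p q + dist q x" by (rule dist_triangle)
      ultimately show "x \<in> ball p (3/10 * L)" by simp
    qed
    then have "ball q (3/10 * L - dist p q) \<subseteq> C" using ballC[OF that(1)] by blast
    then have "q \<in> interior C" unfolding mem_interior using neg by (intro exI[of _ "3/10 * L - dist p q"]) auto
    then show False using that(2) unfolding F_def frontier_def by blast
  qed
  have ratio: "area_ratio C p \<ge> 1/15" if "p \<in> Q" for p
  proof -
    have sub: "ball p (3/20 * L) \<subseteq> closer_region C p"
    proof
      fix x assume x: "x \<in> ball p (3/20 * L)"
      have "dist x p < dist x q" if "q \<in> frontier C" for q
      proof -
        have "dist p q \<ge> 3/10 * L" using farF[OF \<open>p \<in> Q\<close>] that F_def by blast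
        moreover have "dist p q \<le> dist p x + dist x q" by (rule dist_triangle)
        ultimately show ?thesis using x by (simp add: dist_commute)
      qed
      then show "x \<in> closer_region C p" by (simp add: closer_region_def)
    qed
    have "closer_region C p \<in> lmeasurable"
      using closer_region_sub[of p C] QC \<open>p \<in> Q\<close> compact_imp_bounded[OF compC]
      by (intro lmeasurable_open Dopen) (auto intro: bounded_subset)
    then have "measure lebesgue (ball p (3/20 * L)) \<le> measure lebesgue (closer_region C p)"
      using sub by (intro measure_mono_fmeasurable) auto
    moreover have "measure lebesgue (ball p (3/20 * L)) = (3/20 * L)^2 * pi"
      using circle_area[of "3/20 * L" p] Lpos by (simp add: measure_completion)
    ultimately have "(3/20 * L)^2 * pi \<le> measure lebesgue (closer_region C p)" by simp
    moreover have "L^2 / 15 \<le> (3/20 * L)^2 * pi"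
      using pi_gt3 Lpos by (simp add: power2_eq_square field_simps)
    ultimately have "L^2 / 15 \<le> measure lebesgue (closer_region C p)" by linarith
    then show ?thesis unfolding area_ratio_def measC using Lpos by (simp add: field_simps)
  qed
  define G :: "((real^2) \<times> (real^2)) set" where "G = {z. dist (snd z) (fst z) < infdist (snd z) F}"
  have Gopen: "open G" unfolding G_def by (intro open_Collect_less continuous_intros)
  have Gsets: "G \<in> sets (lborel \<Otimes>\<^sub>M lborel)" unfolding lborel_prod using Gopen by simp
  have preG: "Pair p -` G = closer_region C p" for p unfolding G_def Dp by auto
  have emeas: "(\<lambda>p. emeasure lborel (Pair p -` G)) \<in> borel_measurable lborel"
    by (rule lborel.measurable_emeasure_Pair[OF Gsets])
  have ar_eq: "area_ratio C p = enn2real (emeasure lborel (Pair p -` G)) / L^2" for p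
    unfolding area_ratio_def measC preG
    using Dopen[of p] by (simp add: measure_completion measure_def)
  have armeas: "(\<lambda>p. area_ratio C p) \<in> borel_measurable lebesgue"
    unfolding ar_eq by (intro measurable_completion) (use emeas in measurable)
  define S where "S = {p \<in> C. area_ratio C p \<ge> 1/15}"
  have Ssets: "S \<in> sets lebesgue"
  proof -
    have "(\<lambda>p. area_ratio C p) -` {1/15..} \<inter> space lebesgue \<in> sets lebesgue"
      by (rule measurable_sets[OF armeas]) simp
    moreover have "C \<in> sets lebesgue" using lmeasurable_compact[OF compC] by auto
    ultimately have "C \<inter> ((\<lambda>p. area_ratio C p) -` {1/15..} \<inter> space lebesgue) \<in> sets lebesgue" by auto
    moreover have "C \<inter> ((\<lambda>p. area_ratio C p) -` {1/15..} \<inter> space lebesgue) = S" unfolding S_def by auto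
    ultimately show ?thesis by simp
  qed
  have Clm: "C \<in> lmeasurable" using lmeasurable_compact[OF compC] .
  have eC: "emeasure lebesgue C = ennreal (L^2)" using emeasure_eq_measure2[OF Clm] measC by simp
  have "measure (uniform_measure lebesgue C) S = measure lebesgue (C \<inter> S) / measure lebesgue C"
    using eC Lpos Ssets by (intro measure_uniform_measure) auto
  moreover have "measure lebesgue Q \<le> measure lebesgue (C \<inter> S)"
  proof (rule measure_mono_fmeasurable)
    show "Q \<subseteq> C \<inter> S" using QC ratio unfolding S_def by auto
    show "Q \<in> sets lebesgue" unfolding Q_def
      using lmeasurable_compact[OF compact_continuous_image[OF continuous_on_subset[OF contT]]] by auto
    show "C \<inter> S \<in> fmeasurable lebesgue" using Clm Ssets by (intro fmeasurable_Int_fmeasurable) auto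
  qed
  ultimately have "measure (uniform_measure lebesgue C) S \<ge> (L^2 * (4/10)^2) / L^2"
    unfolding measQ measC using Lpos by (simp add: pos_le_divide_eq mult.commute)
  then have "measure (uniform_measure lebesgue C) S \<ge> 4/25" using Lpos by (simp add: power2_eq_square)
  then show ?thesis unfolding S_def by linarith
qed

end
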